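(* For $\epsilon$ sufficiently small, let $\mathcal K[h]$ denote the solution of the transport problem (T) with $H=0$ and boundary data $h\in L^\infty(\{\sin\phi>0\})$. Then for any $0\le\beta\le1$, $$\|\mathrm e^{\beta\eta}\mathcal K[h]\|_{L^\infty}\le\|h\|_{L^\infty_+};\quad\text{in particular } \|\mathcal K[h]\|_{L^\infty}\le\|h\|_{L^\infty_+}.$$
   Context: Fix $0<n<\tfrac12$, $R_1,R_2>0$; for $0<\epsilon<1$ let $L=\epsilon^{-n}$ and $F(\eta,\psi)=-\epsilon\big(\frac{\sin^2\psi}{R_1-\epsilon\eta}+\frac{\cos^2\psi}{R_2-\epsilon\eta}\big)$. Transport problem (T) for $f(\eta,\phi,\psi)$ on $[0,L]\times[-\pi/2,\pi/2]\times[-\pi,\pi]$: $\sin\phi\,\partial_\eta f+F(\eta,\psi)\cos\phi\,\partial_\phi f+f=H(\eta,\phi,\psi)$, $f(0,\phi,\psi)=h(\phi,\psi)$ for $\sin\phi>0$, $f(L,\phi,\psi)=f(L,-\phi,\psi)$ (solved along characteristics). $\|\cdot\|_{L^\infty}$ is the essential sup over $[0,L]\times[-\pi/2,\pi/2]\times[-\pi,\pi]$ and $\|h\|_{L^\infty_+}$ the essential sup over $\{\sin\phi>0\}$. *)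

theory Defs
  imports "HOL-Analysis.Analysis" "HOL-Probability.Essential_Supremum"
begin

definition Lcut :: "real \<Rightarrow> real \<Rightarrow> real" where
  "Lcut n eps = eps powr (-n)"

definition Fcoef :: "real \<Rightarrow> real \<Rightarrow> real \<Rightarrow> real \<Rightarrow> real \<Rightarrow> real" where
  "Fcoef R1 R2 eps eta psi =
     - eps * ((sin psi)^2 / (R1 - eps * eta) + (cos psi)^2 / (R2 - eps * eta))"

text \<open>G(eta,psi) = integral of F from 0 to eta.  Along a characteristic (psi fixed)
  d(cos phi)/d eta = - F cos phi, hence cos phi * exp (G eta psi) is conserved.\<close>
definition Gint :: "real \<Rightarrow> real \<Rightarrow> real \<Rightarrow> real \<Rightarrow> real \<Rightarrow> real" where
  "Gint R1 R2 eps eta psi = integral {0..eta} (\<lambda>y. Fcoef R1 R2 eps y psi)"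

definition cchar :: "real \<Rightarrow> real \<Rightarrow> real \<Rightarrow> real \<Rightarrow> real \<Rightarrow> real \<Rightarrow> real" where
  "cchar R1 R2 eps eta phi psi = cos phi * exp (Gint R1 R2 eps eta psi)"

text \<open>Travel time (arclength parameter s, with d eta/ds = sin phi) along the characteristic
  with constant c between heights a \<le> b: integral of 1/|sin phi|, where
  |sin phi(y)| = sqrt (1 - (c * exp (- G y))^2).\<close>
definition ttime :: "real \<Rightarrow> real \<Rightarrow> real \<Rightarrow> real \<Rightarrow> real \<Rightarrow> real \<Rightarrow> real \<Rightarrow> real" where
  "ttime R1 R2 eps psi c a b =
     integral {a..b} (\<lambda>y. 1 / sqrt (1 - (c * exp (- Gint R1 R2 eps y psi))^2))"

text \<open>Highest point reached by the backward characteristic starting from height eta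
  with sin phi \<le> 0: the turning point (where cos phi = 1) if it lies in [eta, L],
  otherwise the specular reflection wall L.\<close>
definition turnpt :: "real \<Rightarrow> real \<Rightarrow> real \<Rightarrow> real \<Rightarrow> real \<Rightarrow> real \<Rightarrow> real \<Rightarrow> real" where
  "turnpt n R1 R2 eps psi c eta =
     (if \<exists>y\<in>{eta..Lcut n eps}. c * exp (- Gint R1 R2 eps y psi) \<ge> 1
      then Inf {y\<in>{eta..Lcut n eps}. c * exp (- Gint R1 R2 eps y psi) \<ge> 1}
      else Lcut n eps)"

text \<open>K[h]: solution of (T) with H = 0 and inflow data h, obtained by following the
  characteristic backwards to eta = 0 (through the turning point or the
  reflection at eta = L) and multiplying by exp(-travel time).  At eta = 0 the
  incoming angle is arccos c, with sin > 0.\<close>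
definition Ksol :: "real \<Rightarrow> real \<Rightarrow> real \<Rightarrow> real \<Rightarrow> (real \<times> real \<Rightarrow> real)
                    \<Rightarrow> real \<times> real \<times> real \<Rightarrow> real" where
  "Ksol n R1 R2 eps h = (\<lambda>(eta, phi, psi).
     (let c = cchar R1 R2 eps eta phi psi;
          phi0 = arccos c
      in if sin phi > 0
         then h (phi0, psi) * exp (- ttime R1 R2 eps psi c 0 eta)
         else (let m = turnpt n R1 R2 eps psi c eta in
               h (phi0, psi) * exp (- (ttime R1 R2 eps psi c 0 m + ttime R1 R2 eps psi c eta m)))))"

definition Dom :: "real \<Rightarrow> real \<Rightarrow> (real \<times> real \<times> real) set" where
  "Dom n eps = {0..Lcut n eps} \<times> {-pi/2..pi/2} \<times> {-pi..pi}"

definition Dplus :: "(real \<times> real) set" where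
  "Dplus = {phi\<in>{-pi/2..pi/2}. sin phi > 0} \<times> {-pi..pi}"

end

theory Submission
  imports Defs
begin


definition Gc :: "real \<Rightarrow> real \<Rightarrow> real \<Rightarrow> real \<Rightarrow> real \<Rightarrow> real" where
  "Gc R1 R2 eps y psi = (sin psi)^2 * ln (1 - eps*y/R1) + (cos psi)^2 * ln (1 - eps*y/R2)"

lemma Gc_measurable[measurable]:
  assumes [measurable]: "f \<in> borel_measurable M" "g \<in> borel_measurable M"
  shows "(\<lambda>x. Gc R1 R2 eps (f x) (g x)) \<in> borel_measurable M"
  unfolding Gc_def by measurable

lemma Gc_deriv:
  assumes "0 < R1" "0 < R2" "eps * y < R1" "eps * y < R2"
  shows "((\<lambda>y. Gc R1 R2 eps y psi) has_real_derivative Fcoef R1 R2 eps y psi) (at y within S)"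
proof -
  have p1: "0 < 1 - eps*y/R1" "0 < 1 - eps*y/R2" using assms by (auto simp: field_simps)
  have "((\<lambda>y. Gc R1 R2 eps y psi) has_real_derivative
      (sin psi)^2 * ((- (eps/R1)) / (1 - eps*y/R1)) + (cos psi)^2 * ((- (eps/R2)) / (1 - eps*y/R2))) (at y within S)"
    unfolding Gc_def using p1
    using assms(1,2) by (auto intro!: derivative_eq_intros simp: algebra_simps)
  moreover have "(sin psi)^2 * ((- (eps/R1)) / (1 - eps*y/R1)) + (cos psi)^2 * ((- (eps/R2)) / (1 - eps*y/R2))
     = Fcoef R1 R2 eps y psi"
    unfolding Fcoef_def using assms p1 by (auto simp: field_simps)
  ultimately show ?thesis by simp
qed

lemma Gint_eq:
  assumes "0 < R1" "0 < R2" "0 \<le> eps" "0 \<le> eta" "eps * eta < R1" "eps * eta < R2"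
  shows "Gint R1 R2 eps eta psi = Gc R1 R2 eps eta psi"
proof -
  have "((\<lambda>y. Fcoef R1 R2 eps y psi) has_integral (Gc R1 R2 eps eta psi - Gc R1 R2 eps 0 psi)) {0..eta}"
  proof (rule fundamental_theorem_of_calculus)
    show "0 \<le> eta" by fact
    fix y assume y: "y \<in> {0..eta}"
    have "eps * y \<le> eps * eta" using y assms by (auto intro: mult_left_mono)
    then show "((\<lambda>y. Gc R1 R2 eps y psi) has_vector_derivative Fcoef R1 R2 eps y psi) (at y within {0..eta})"
      using assms by (auto intro!: Gc_deriv simp: has_real_derivative_iff_has_vector_derivative[symmetric])
  qed
  then show ?thesis unfolding Gint_def by (simp add: integral_unique Gc_def)
qed


locale lay =
  fixes n R1 R2 eps :: real
  assumes R1: "0 < R1" and R2: "0 < R2" and epos: "0 < eps"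
    and small1: "eps * Lcut n eps < R1" and small2: "eps * Lcut n eps < R2"
begin

abbreviation "L \<equiv> Lcut n eps"

lemma Lpos: "0 < L" unfolding Lcut_def using epos by simp

lemma small_y:
  assumes "0 \<le> y" "y \<le> L" shows "eps*y < R1" "eps*y < R2"
proof -
  have "eps * y \<le> eps * L" using assms epos by (auto intro: mult_left_mono)
  then show "eps*y < R1" "eps*y < R2" using small1 small2 by auto
qed

lemma Gint_eqL: "0 \<le> y \<Longrightarrow> y \<le> L \<Longrightarrow> Gint R1 R2 eps y psi = Gc R1 R2 eps y psi"
  using Gint_eq[OF R1 R2 _ _ small_y] epos by auto

lemma Gc0: "Gc R1 R2 eps 0 psi = 0" by (simp add: Gc_def)

lemma lnarg_pos: "0 \<le> y \<Longrightarrow> y \<le> L \<Longrightarrow> 0 < 1 - eps*y/R1 \<and> 0 < 1 - eps*y/R2"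
  using small_y[of y] R1 R2 by (auto simp: field_simps)

lemma Gc_strict:
  assumes "0 \<le> y" "y < z" "z \<le> L"
  shows "Gc R1 R2 eps z psi < Gc R1 R2 eps y psi"
proof -
  have py: "0 < 1 - eps*y/R1" "0 < 1 - eps*y/R2" using lnarg_pos[of y] assms by auto
  have pz: "0 < 1 - eps*z/R1" "0 < 1 - eps*z/R2" using lnarg_pos[of z] assms by auto
  have "eps*y < eps*z" using assms epos by auto
  then have "eps*y/R1 < eps*z/R1" "eps*y/R2 < eps*z/R2" using R1 R2 by (auto simp: divide_strict_right_mono)
  then have l1: "ln (1 - eps*z/R1) < ln (1 - eps*y/R1)" and l2: "ln (1 - eps*z/R2) < ln (1 - eps*y/R2)"
    using py pz by auto
  have s: "(sin psi)^2 + (cos psi)^2 = 1" by simp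
  show ?thesis
  proof (cases "sin psi = 0")
    case True
    then have "(cos psi)^2 = 1" using s by simp
    then show ?thesis using l1 l2 True by (simp add: Gc_def)
  next
    case False
    then have "0 < (sin psi)^2" by simp
    then have "(sin psi)^2 * ln (1 - eps*z/R1) < (sin psi)^2 * ln (1 - eps*y/R1)" using l1 by simp
    moreover have "(cos psi)^2 * ln (1 - eps*z/R2) \<le> (cos psi)^2 * ln (1 - eps*y/R2)"
      using l2 by (intro mult_left_mono) auto
    ultimately show ?thesis by (simp add: Gc_def)
  qed
qed

lemma Gc_mono: "0 \<le> y \<Longrightarrow> y \<le> z \<Longrightarrow> z \<le> L \<Longrightarrow> Gc R1 R2 eps z psi \<le> Gc R1 R2 eps y psi"
  using Gc_strict[of y z psi] by (cases "y = z") auto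

lemma Gc_le0: "0 \<le> y \<Longrightarrow> y \<le> L \<Longrightarrow> Gc R1 R2 eps y psi \<le> 0"
  using Gc_mono[of 0 y psi] Gc0 by simp

lemma Gc_neg: "0 < y \<Longrightarrow> y \<le> L \<Longrightarrow> Gc R1 R2 eps y psi < 0"
  using Gc_strict[of 0 y psi] Gc0 by simp

lemma Gc_cont: "continuous_on {0..L} (\<lambda>y. Gc R1 R2 eps y psi)"
proof -
  have h: "\<And>y. y \<in> {0..L} \<Longrightarrow> 1 - eps*y/R1 \<noteq> 0 \<and> 1 - eps*y/R2 \<noteq> 0" using lnarg_pos by force
  show ?thesis unfolding Gc_def by (intro continuous_intros) (use h R1 R2 in auto)
qed

lemma Ec_deriv:
  assumes "0 \<le> y" "y \<le> L"
  shows "((\<lambda>y. exp (- Gc R1 R2 eps y psi)) has_real_derivative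
           exp (- Gc R1 R2 eps y psi) * (- Fcoef R1 R2 eps y psi)) (at y)"
  using Gc_deriv[OF R1 R2 small_y[OF assms], of psi UNIV]
  by (auto intro!: derivative_eq_intros)

lemma negF_lb:
  assumes "0 \<le> y" "y \<le> L"
  shows "eps / (R1 + R2) \<le> - Fcoef R1 R2 eps y psi"
proof -
  have a: "0 < R1 - eps*y" "0 < R2 - eps*y" using small_y[OF assms] by auto
  have "0 \<le> eps*y" using assms epos by simp
  then have b: "R1 - eps*y \<le> R1 + R2" "R2 - eps*y \<le> R1 + R2" using R1 R2 by auto
  have "1/(R1+R2) \<le> 1/(R1 - eps*y)" "1/(R1+R2) \<le> 1/(R2 - eps*y)"
    using a b by (auto intro!: divide_left_mono)
  then have "(sin psi)^2 * (1/(R1+R2)) + (cos psi)^2 * (1/(R1+R2)) \<le>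
        (sin psi)^2 * (1/(R1 - eps*y)) + (cos psi)^2 * (1/(R2 - eps*y))"
    by (intro add_mono mult_left_mono) auto
  then have "1/(R1+R2) \<le> (sin psi)^2 / (R1 - eps*y) + (cos psi)^2 / (R2 - eps*y)"
    by (simp add: add_divide_distrib[symmetric])
  then have "eps * (1/(R1+R2)) \<le> eps * ((sin psi)^2 / (R1 - eps*y) + (cos psi)^2 / (R2 - eps*y))"
    using epos by (intro mult_left_mono) auto
  then show ?thesis unfolding Fcoef_def by simp
qed

lemma Ec_growth:
  assumes "0 \<le> y" "y \<le> z" "z \<le> L"
  shows "eps / (R1 + R2) * (z - y) \<le> exp (- Gc R1 R2 eps z psi) - exp (- Gc R1 R2 eps y psi)"
proof (cases "y = z")
  case True then show ?thesis by simp
next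
  case False
  then have yz: "y < z" using assms by simp
  obtain w where w: "y < w" "w < z"
    "exp (- Gc R1 R2 eps z psi) - exp (- Gc R1 R2 eps y psi) = (z - y) * (exp (- Gc R1 R2 eps w psi) * (- Fcoef R1 R2 eps w psi))"
    using MVT2[OF yz, of "\<lambda>y. exp (- Gc R1 R2 eps y psi)" "\<lambda>y. exp (- Gc R1 R2 eps y psi) * (- Fcoef R1 R2 eps y psi)"]
      Ec_deriv assms by force
  have "1 \<le> exp (- Gc R1 R2 eps w psi)" using Gc_le0[of w psi] w assms by simp
  moreover have "eps / (R1 + R2) \<le> - Fcoef R1 R2 eps w psi" using negF_lb[of w psi] w assms by simp
  moreover have "0 \<le> eps / (R1 + R2)" using epos R1 R2 by simp
  ultimately have "eps / (R1 + R2) \<le> exp (- Gc R1 R2 eps w psi) * (- Fcoef R1 R2 eps w psi)"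
    by (metis mult_1 mult_mono order_trans zero_le_one)
  then have "(z - y) * (eps / (R1 + R2)) \<le> (z - y) * (exp (- Gc R1 R2 eps w psi) * (- Fcoef R1 R2 eps w psi))"
    using yz by (intro mult_left_mono) auto
  then show ?thesis unfolding w(3) by (simp only: mult.commute)
qed


lemma gfun_ge1:
  assumes "0 \<le> q" "q < 1"
  shows "1 \<le> 1 / sqrt (1 - q^2)"
proof -
  have "q^2 < 1" using assms by (simp add: power_less_one_iff abs_less_iff power2_less_1_iff)  
  moreover have "0 \<le> q^2" by simp
  ultimately have "0 < sqrt (1 - q^2)" "sqrt (1 - q^2) \<le> 1" by auto
  then show ?thesis by (simp add: field_simps)
qed

lemma borel_lebesgue_on: "f \<in> borel_measurable borel \<Longrightarrow> f \<in> borel_measurable (lebesgue_on S)"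
  by (rule measurable_restrict_space1, rule measurable_completion) simp

lemma tt_int:
  assumes C: "0 \<le> C" and b: "0 \<le> b" "b \<le> L"
    and lt: "\<And>y. 0 \<le> y \<Longrightarrow> y < b \<Longrightarrow> C * exp (- Gc R1 R2 eps y psi) < 1"
    and le: "C * exp (- Gc R1 R2 eps b psi) \<le> 1"
  shows "(\<lambda>y. 1 / sqrt (1 - (C * exp (- Gint R1 R2 eps y psi))^2)) integrable_on {0..b}"
    and "b \<le> ttime R1 R2 eps psi C 0 b"
proof -
  define g where "g = (\<lambda>y. 1 / sqrt (1 - (C * exp (- Gc R1 R2 eps y psi))^2))"
  have eqg: "\<And>y. y \<in> {0..b} \<Longrightarrow> 1 / sqrt (1 - (C * exp (- Gint R1 R2 eps y psi))^2) = g y"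
    using Gint_eqL b unfolding g_def by auto
  have qnn: "\<And>y. 0 \<le> C * exp (- Gc R1 R2 eps y psi)" using C by simp
  have gint: "g integrable_on {0..b}"
  proof (cases "C * exp (- Gc R1 R2 eps b psi) < 1")
    case True
    then have q1: "\<And>y. y \<in> {0..b} \<Longrightarrow> C * exp (- Gc R1 R2 eps y psi) < 1"
      using lt by (metis atLeastAtMost_iff order_le_less)
    have pos: "\<And>y. y \<in> {0..b} \<Longrightarrow> sqrt (1 - (C * exp (- Gc R1 R2 eps y psi))^2) \<noteq> 0"
    proof -
      fix y assume y: "y \<in> {0..b}"
      have "(C * exp (- Gc R1 R2 eps y psi))^2 < 1"
        using q1[OF y] qnn[of y] by (simp add: power2_less_1_iff)
      then show "sqrt (1 - (C * exp (- Gc R1 R2 eps y psi))^2) \<noteq> 0" by simp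
    qed
    have "continuous_on {0..b} (\<lambda>y. Gc R1 R2 eps y psi)"
      by (rule continuous_on_subset[OF Gc_cont]) (use b in auto)
    then have "continuous_on {0..b} g"
      unfolding g_def using pos by (intro continuous_intros) auto
    then show ?thesis by (rule integrable_continuous_interval)
  next
    case False
    then have qb: "C * exp (- Gc R1 R2 eps b psi) = 1" using le by simp
    then have Cpos: "0 < C" using C by (cases "C = 0") auto
    define d where "d = C * (eps / (R1 + R2))"
    have dpos: "0 < d" unfolding d_def using Cpos epos R1 R2 by simp
    define k where "k = (\<lambda>y. d powr (-1/2) * (b - y) powr (-1/2))"
    have kint: "k integrable_on {0..b}"
    proof -
      have "((\<lambda>x. x powr (-1/2)) has_integral (b powr (-1/2+1) / (-1/2+1))) {0..b}"
        by (rule has_integral_powr_from_0) (use b in auto)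
      then have "((\<lambda>x. (-x) powr (-1/2)) has_integral (b powr (-1/2+1) / (-1/2+1))) {-b..-0}"
        by (subst has_integral_reflect_real) 
      then have "((\<lambda>x. (-(x + (-b))) powr (-1/2)) has_integral (b powr (-1/2+1) / (-1/2+1))) {-b - (-b)..-0 - (-b)}"
        by (rule has_integral_shift_real_ivl)
      then have "(\<lambda>x. (b - x) powr (-1/2)) integrable_on {0..b}"
        by (auto simp: integrable_on_def)
      then show ?thesis unfolding k_def by (rule integrable_on_mult_right)
    qed
    have gmeas: "g \<in> borel_measurable (lebesgue_on {0..b})"
      unfolding g_def by (rule borel_lebesgue_on) measurable
    have bound: "\<bar>g y\<bar> \<le> k y" if y: "y \<in> {0..b}" for y
    proof (cases "y = b")
      case True then show ?thesis by (simp add: g_def k_def qb)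
    next
      case False
      then have yb: "0 \<le> y" "y < b" using y by auto
      define q where "q = C * exp (- Gc R1 R2 eps y psi)"
      have q0: "0 \<le> q" "q < 1" unfolding q_def using qnn lt yb by auto
      have "eps / (R1 + R2) * (b - y) \<le> exp (- Gc R1 R2 eps b psi) - exp (- Gc R1 R2 eps y psi)"
        using Ec_growth[of y b psi] yb b by simp
      then have "C * (eps / (R1 + R2) * (b - y)) \<le> C * (exp (- Gc R1 R2 eps b psi) - exp (- Gc R1 R2 eps y psi))"
        using C by (rule mult_left_mono)
      then have "d * (b - y) \<le> 1 - q" unfolding d_def q_def using qb by (simp add: algebra_simps)
      also have "1 - q \<le> 1 - q^2" using q0 mult_left_le_one_le[of q q] by (simp add: power2_eq_square)
      finally have dq: "d * (b - y) \<le> 1 - q^2" .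
      have dbpos: "0 < d * (b - y)" using dpos yb by simp
      have "g y = 1 / sqrt (1 - q^2)" unfolding g_def q_def by simp
      also have "\<dots> \<le> 1 / sqrt (d * (b - y))"
        using dq dbpos by (intro divide_left_mono) auto
      also have "\<dots> = k y" unfolding k_def using dpos yb
        by (simp add: powr_minus_divide powr_half_sqrt[symmetric] powr_mult[symmetric] divide_simps)
      finally have "g y \<le> k y" .
      moreover have "0 \<le> g y" unfolding g_def using q0 unfolding q_def by (simp add: power_le_one)
      ultimately show ?thesis by simp
    qed
    show ?thesis
      by (rule measurable_bounded_by_integrable_imp_integrable_real[OF gmeas kint bound]) auto
  qed
  show "(\<lambda>y. 1 / sqrt (1 - (C * exp (- Gint R1 R2 eps y psi))^2)) integrable_on {0..b}"
    by (subst integrable_cong[where g=g]) (auto simp: eqg gint)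
  define g' where "g' = (\<lambda>y. if y = b then 1 else g y)"
  have g'int: "g' integrable_on {0..b}"
    by (rule integrable_spike_finite[of "{b}" _ _ g]) (auto simp: g'_def gint)
  have "integral {0..b} (\<lambda>y. 1::real) \<le> integral {0..b} g'"
  proof (rule integral_le)
    fix y assume y: "y \<in> {0..b}"
    show "1 \<le> g' y"
    proof (cases "y = b")
      case False
      then have "0 \<le> y" "y < b" using y by auto
      then show ?thesis unfolding g'_def g_def using gfun_ge1 qnn lt False by auto
    qed (simp add: g'_def)
  qed (auto simp: g'int)
  also have "integral {0..b} g' = integral {0..b} g"
    by (rule integral_spike[of "{b}"]) (auto simp: g'_def)
  also have "\<dots> = ttime R1 R2 eps psi C 0 b"
    unfolding ttime_def using eqg by (intro integral_cong) auto
  finally show "b \<le> ttime R1 R2 eps psi C 0 b" using b by simp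
qed


lemma q_below_eta:
  assumes "0 \<le> y" "y < eta" "eta \<le> L" "0 \<le> cp" "cp \<le> 1"
  shows "cp * exp (Gc R1 R2 eps eta psi) * exp (- Gc R1 R2 eps y psi) < 1"
proof -
  have "Gc R1 R2 eps eta psi < Gc R1 R2 eps y psi" using Gc_strict assms by auto
  then have e: "exp (Gc R1 R2 eps eta psi) * exp (- Gc R1 R2 eps y psi) < 1"
    by (simp add: exp_minus field_simps)
  show ?thesis
  proof (cases "cp = 0")
    case False
    then have "cp * (exp (Gc R1 R2 eps eta psi) * exp (- Gc R1 R2 eps y psi)) < cp * 1"
      using assms e by (intro mult_strict_left_mono) auto
    then show ?thesis using assms by (simp add: mult.assoc)
  qed simp
qed

lemma turn_facts:
  assumes eta: "0 \<le> eta" "eta \<le> L" and cp: "0 \<le> cp" "cp \<le> 1"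
    and Cdef: "C = cp * exp (Gc R1 R2 eps eta psi)"
    and mdef: "m = turnpt n R1 R2 eps psi C eta"
  shows "eta \<le> m" "m \<le> L" "\<And>y. 0 \<le> y \<Longrightarrow> y < m \<Longrightarrow> C * exp (- Gc R1 R2 eps y psi) < 1"
    "C * exp (- Gc R1 R2 eps m psi) \<le> 1"
    "\<And>t. m \<le> t \<longleftrightarrow> (L \<le> t \<or> (eta \<le> t \<and> t \<le> L \<and> 1 \<le> C * exp (- Gc R1 R2 eps t psi)))"
proof -
  define q where "q = (\<lambda>y. C * exp (- Gc R1 R2 eps y psi))"
  define S where "S = {y\<in>{eta..L}. 1 \<le> q y}"
  have Seq: "{y\<in>{eta..Lcut n eps}. C * exp (- Gint R1 R2 eps y psi) \<ge> 1} = S"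
    unfolding S_def q_def using Gint_eqL eta by auto
  have qeta: "q eta = cp" unfolding q_def Cdef by (simp add: exp_minus field_simps)
  have below: "\<And>y. 0 \<le> y \<Longrightarrow> y < eta \<Longrightarrow> q y < 1"
    unfolding q_def Cdef using q_below_eta eta cp by auto
  have qcont: "continuous_on {eta..L} q"
    unfolding q_def by (intro continuous_intros continuous_on_subset[OF Gc_cont]) (use eta in auto)
  have qmono: "\<And>y z. eta \<le> y \<Longrightarrow> y \<le> z \<Longrightarrow> z \<le> L \<Longrightarrow> q y \<le> q z"
    unfolding q_def Cdef using Gc_mono eta cp by (intro mult_left_mono) auto
  have "eta \<le> m \<and> m \<le> L \<and> (\<forall>y. 0 \<le> y \<and> y < m \<longrightarrow> q y < 1) \<and> q m \<le> 1 \<and>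
     (\<forall>t. m \<le> t \<longleftrightarrow> (L \<le> t \<or> (eta \<le> t \<and> t \<le> L \<and> 1 \<le> q t)))"
  proof (cases "S = {}")
    case True
    then have mL: "m = L" unfolding mdef turnpt_def using Seq by auto
    have lt: "\<And>y. eta \<le> y \<Longrightarrow> y \<le> L \<Longrightarrow> q y < 1" using True unfolding S_def by force
    have a1: "\<forall>y. 0 \<le> y \<and> y < m \<longrightarrow> q y < 1"
    proof (intro allI impI)
      fix y assume y: "0 \<le> y \<and> y < m"
      show "q y < 1" using below[of y] lt[of y] y mL by (cases "y < eta") auto
    qed
    have a2: "q m \<le> 1" using lt[of L] mL eta by simp
    have a3: "\<forall>t. m \<le> t \<longleftrightarrow> (L \<le> t \<or> (eta \<le> t \<and> t \<le> L \<and> 1 \<le> q t))"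
    proof
      fix t show "m \<le> t \<longleftrightarrow> (L \<le> t \<or> (eta \<le> t \<and> t \<le> L \<and> 1 \<le> q t))"
        using lt[of t] mL by (auto simp: not_le)
    qed
    show ?thesis using a1 a2 a3 mL eta by simp
  next
    case False
    then have mS: "m = Inf S" unfolding mdef turnpt_def using Seq by auto
    have closed: "closed S" unfolding S_def
      by (rule continuous_on_closed_Collect_le[OF continuous_on_const qcont]) simp
    have bdd: "bdd_below S" unfolding S_def by (auto intro!: bdd_belowI[of _ eta])
    have minS: "m \<in> S" unfolding mS using closed_contains_Inf[OF False bdd closed] .
    then have m1: "eta \<le> m" "m \<le> L" "1 \<le> q m" unfolding S_def by auto
    have low: "\<And>y. y \<in> S \<Longrightarrow> m \<le> y" unfolding mS using bdd by (auto intro: cInf_lower)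
    have lt: "\<And>y. 0 \<le> y \<Longrightarrow> y < m \<Longrightarrow> q y < 1"
    proof -
      fix y assume y: "0 \<le> y" "y < m"
      show "q y < 1"
      proof (cases "y < eta")
        case True then show ?thesis using below y by auto
      next
        case False
        then have "y \<notin> S" using low y by force
        then show ?thesis using False y m1 unfolding S_def by auto
      qed
    qed
    have qm: "q m \<le> 1"
    proof -
      have "continuous_on {eta..m} q" using qcont by (rule continuous_on_subset) (use m1 in auto)
      then obtain z where z: "eta \<le> z" "z \<le> m" "q z = 1"
        using IVT'[of q eta 1 m] qeta cp m1 by auto
      then have "z \<in> S" unfolding S_def using m1 by auto
      then have "z = m" using low z by force
      then show ?thesis using z by simp
    qed
    have char: "\<And>t. m \<le> t \<longleftrightarrow> (L \<le> t \<or> (eta \<le> t \<and> t \<le> L \<and> 1 \<le> q t))"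
    proof
      fix t assume "m \<le> t"
      then show "L \<le> t \<or> (eta \<le> t \<and> t \<le> L \<and> 1 \<le> q t)"
        using qmono[of m t] m1 by (cases "L \<le> t") auto
    next
      fix t assume "L \<le> t \<or> (eta \<le> t \<and> t \<le> L \<and> 1 \<le> q t)"
      then show "m \<le> t"
        using m1 low[of t] unfolding S_def by auto
    qed
    show ?thesis using m1 lt qm char by auto
  qed
  then show "eta \<le> m" "m \<le> L" "\<And>y. 0 \<le> y \<Longrightarrow> y < m \<Longrightarrow> C * exp (- Gc R1 R2 eps y psi) < 1"
    "C * exp (- Gc R1 R2 eps m psi) \<le> 1"
    "\<And>t. m \<le> t \<longleftrightarrow> (L \<le> t \<or> (eta \<le> t \<and> t \<le> L \<and> 1 \<le> C * exp (- Gc R1 R2 eps t psi)))"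
    unfolding q_def by auto
qed


lemma tt_nonneg:
  assumes C: "0 \<le> C" and b: "0 \<le> b" "b \<le> L"
    and lt: "\<And>y. 0 \<le> y \<Longrightarrow> y < b \<Longrightarrow> C * exp (- Gc R1 R2 eps y psi) < 1"
    and le: "C * exp (- Gc R1 R2 eps b psi) \<le> 1"
    and y: "y \<in> {0..b}"
  shows "0 \<le> 1 / sqrt (1 - (C * exp (- Gint R1 R2 eps y psi))^2)"
proof -
  have "C * exp (- Gc R1 R2 eps y psi) \<le> 1" using lt[of y] le y by (cases "y = b") force+
  moreover have "0 \<le> C * exp (- Gc R1 R2 eps y psi)" using C by simp
  ultimately have "(C * exp (- Gc R1 R2 eps y psi))^2 \<le> 1" by (simp add: power_le_one)
  then show ?thesis using Gint_eqL[of y psi] y b by simp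
qed

lemma exp_bound:
  fixes B T v :: real
  assumes "B \<le> T"
  shows "\<bar>exp B * (v * exp (- T))\<bar> \<le> \<bar>v\<bar>"
proof -
  have "exp B * (v * exp (- T)) = v * exp (B - T)"
  proof -
    have "exp B * exp (- T) = exp (B - T)" using mult_exp_exp[of B "-T"] by simp
    then show ?thesis by (simp add: mult.left_commute)
  qed
  then have "\<bar>exp B * (v * exp (- T))\<bar> = \<bar>v\<bar> * exp (B - T)"
    by (simp add: abs_mult)
  also have "\<dots> \<le> \<bar>v\<bar> * 1" using assms by (intro mult_left_mono) auto
  finally show ?thesis by simp
qed

lemma cos_dom: "-pi/2 \<le> phi \<Longrightarrow> phi \<le> pi/2 \<Longrightarrow> 0 \<le> cos phi"
  by (rule cos_ge_zero) auto

lemma Ksol_bound: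
  assumes x: "(eta, phi, psi) \<in> Dom n eps" and beta: "0 \<le> beta" "beta \<le> 1"
  shows "\<bar>exp (beta * eta) * Ksol n R1 R2 eps h (eta, phi, psi)\<bar>
           \<le> \<bar>h (arccos (cchar R1 R2 eps eta phi psi), psi)\<bar>"
proof -
  have eta: "0 \<le> eta" "eta \<le> L" and phi: "-pi/2 \<le> phi" "phi \<le> pi/2"
    using x unfolding Dom_def by auto
  define cp where "cp = cos phi"
  have cp: "0 \<le> cp" "cp \<le> 1" unfolding cp_def using cos_dom phi by auto
  define C where "C = cchar R1 R2 eps eta phi psi"
  have Ceq: "C = cp * exp (Gc R1 R2 eps eta psi)"
    unfolding C_def cchar_def cp_def using Gint_eqL eta by simp
  have C0: "0 \<le> C" using Ceq cp by simp
  have qeta: "C * exp (- Gc R1 R2 eps eta psi) = cp" unfolding Ceq by (simp add: exp_minus field_simps)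
  have beta_eta: "beta * eta \<le> eta" using beta eta by (simp add: mult_left_le_one_le)
  show ?thesis
  proof (cases "sin phi > 0")
    case True
    have "eta \<le> ttime R1 R2 eps psi C 0 eta"
      by (rule tt_int(2)[OF C0 eta]) (use q_below_eta cp eta qeta in \<open>auto simp: Ceq mult.assoc\<close>)
    then have bt: "beta * eta \<le> ttime R1 R2 eps psi C 0 eta" using beta_eta by simp
    show ?thesis using True exp_bound[OF bt, of "h (arccos C, psi)"]
      by (simp add: Ksol_def Let_def C_def[symmetric])
  next
    case False
    define m where "m = turnpt n R1 R2 eps psi C eta"
    note tf = turn_facts[OF eta cp Ceq m_def]
    have m0: "0 \<le> m" using tf(1) eta by simp
    have t1: "m \<le> ttime R1 R2 eps psi C 0 m"
      by (rule tt_int(2)[OF C0 m0 tf(2) tf(3) tf(4)])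
    have int: "(\<lambda>y. 1 / sqrt (1 - (C * exp (- Gint R1 R2 eps y psi))^2)) integrable_on {eta..m}"
      by (rule integrable_subinterval_real[OF tt_int(1)[OF C0 m0 tf(2) tf(3) tf(4)]]) (use eta in auto)
    have t2: "0 \<le> ttime R1 R2 eps psi C eta m"
      unfolding ttime_def
      by (rule integral_nonneg[OF int]) (rule tt_nonneg[OF C0 m0 tf(2) tf(3) tf(4)], use eta in auto)
    have bt: "beta * eta \<le> ttime R1 R2 eps psi C 0 m + ttime R1 R2 eps psi C eta m"
      using t1 t2 tf(1) beta_eta by linarith
    show ?thesis using False exp_bound[OF bt, of "h (arccos C, psi)"]
      by (simp add: Ksol_def Let_def C_def[symmetric] m_def[symmetric])
  qed
qed

end



lemma negligible_UNIV_times: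
  fixes B :: "(real \<times> real) set"
  assumes "negligible B" shows "negligible ((UNIV::real set) \<times> B)"
proof -
  from assms obtain N where N: "N \<in> null_sets lborel" "B \<subseteq> N"
    using negligible_iff_null_sets null_sets_completion_iff2 by metis
  have "(UNIV::real set) \<times> N \<in> null_sets (lborel \<Otimes>\<^sub>M lborel)"
    using N(1) by (intro lborel.times_in_null_sets2) auto
  then have "(UNIV::real set) \<times> N \<in> null_sets lebesgue"
    unfolding lborel_prod by (rule null_sets_completionI)
  then have "negligible ((UNIV::real set) \<times> N)" by (simp add: negligible_iff_null_sets)
  then show ?thesis by (rule negligible_subset) (use N in auto)
qed

lemma Psi_diff:
  assumes "R1 \<noteq> 0" "R2 \<noteq> 0" "0 < 1 - eps * a / R1" "0 < 1 - eps * a / R2" "-1 < cos u / exp (Gc R1 R2 eps a w)" "cos u / exp (Gc R1 R2 eps a w) < 1"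
  shows "(\<lambda>p::real\<times>real\<times>real. (fst p, s * arccos (cos (fst (snd p)) / exp (Gc R1 R2 eps (fst p) (snd (snd p)))), snd (snd p))) differentiable (at (a,u,w))"
  using assms unfolding differentiable_def Gc_def
  apply -
  apply (rule exI)
  apply (rule derivative_intros | (simp; fail))+
  done

context lay begin

lemma Tm_negl:
  assumes Bneg: "negligible B"
  shows "negligible {x \<in> Dom n eps. fst (snd x) \<noteq> 0 \<and>
     (arccos (cchar R1 R2 eps (fst x) (fst (snd x)) (snd (snd x))), snd (snd x)) \<in> B}"
proof -
  define W where "W = {p::real\<times>real\<times>real. 0 \<le> fst p \<and> fst p \<le> L \<and> snd p \<in> B \<and>
     0 \<le> cos (fst (snd p)) \<and> cos (fst (snd p)) < exp (Gc R1 R2 eps (fst p) (snd (snd p)))}"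
  define Psi where "Psi = (\<lambda>(s::real) (p::real\<times>real\<times>real). (fst p, s * arccos (cos (fst (snd p)) / exp (Gc R1 R2 eps (fst p) (snd (snd p)))), snd (snd p)))"
  have Wneg: "negligible W"
    by (rule negligible_subset[OF negligible_UNIV_times[OF Bneg]]) (auto simp: W_def)
  have diff: "Psi s differentiable_on W" for s
  proof (rule differentiable_at_imp_differentiable_on)
    fix p assume p: "p \<in> W"
    obtain a u w where pe: "p = (a, u, w)" by (cases p) auto
    have a: "0 \<le> a" "a \<le> L" "0 \<le> cos u" "cos u < exp (Gc R1 R2 eps a w)" using p unfolding W_def pe by auto
    have "cos u / exp (Gc R1 R2 eps a w) < 1" using a by simp
    moreover have "-1 < cos u / exp (Gc R1 R2 eps a w)"
      using a by (smt (verit) divide_nonneg_pos exp_gt_zero)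
    ultimately show "Psi s differentiable at p"
      unfolding pe Psi_def using R1 R2 lnarg_pos[OF a(1,2)]
      by (intro Psi_diff) auto
  qed
  have neg: "negligible (Psi s ` W)" for s
    by (rule negligible_differentiable_image_negligible[OF order_refl Wneg diff])
  have sub: "{x \<in> Dom n eps. fst (snd x) \<noteq> 0 \<and>
     (arccos (cchar R1 R2 eps (fst x) (fst (snd x)) (snd (snd x))), snd (snd x)) \<in> B}
     \<subseteq> Psi 1 ` W \<union> Psi (-1) ` W"
  proof
    fix x assume x: "x \<in> {x \<in> Dom n eps. fst (snd x) \<noteq> 0 \<and>
     (arccos (cchar R1 R2 eps (fst x) (fst (snd x)) (snd (snd x))), snd (snd x)) \<in> B}"
    obtain eta phi psi where xe: "x = (eta, phi, psi)" by (cases x) auto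
    have eta: "0 \<le> eta" "eta \<le> L" and phi: "-pi/2 \<le> phi" "phi \<le> pi/2" "phi \<noteq> 0"
      and inB: "(arccos (cchar R1 R2 eps eta phi psi), psi) \<in> B"
      using x unfolding xe Dom_def by auto
    define K where "K = exp (Gc R1 R2 eps eta psi)"
    have K: "0 < K" "K \<le> 1" unfolding K_def using Gc_le0 eta by auto
    define C where "C = cchar R1 R2 eps eta phi psi"
    have Ceq: "C = cos phi * K" unfolding C_def cchar_def K_def using Gint_eqL eta by simp
    have cp: "0 \<le> cos phi" using cos_dom phi by auto
    have "cos \<bar>phi\<bar> < cos 0"
      by (rule cos_monotone_0_pi) (use phi in auto)
    then have cp1: "cos phi < 1" by simp
    have C01: "0 \<le> C" "C \<le> 1" using Ceq cp cp1 K by (auto intro: mult_le_one)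
    have CK: "C < K" using Ceq cp1 K by simp
    define p where "p = (eta, arccos C, psi)"
    have cosac: "cos (arccos C) = C" using C01 by (intro cos_arccos) auto
    have pW: "p \<in> W" unfolding W_def p_def using eta inB C01 CK cosac
      by (auto simp: C_def[symmetric] K_def[symmetric])
    have acp: "arccos (cos phi) = \<bar>phi\<bar>"
    proof (cases "0 \<le> phi")
      case True then show ?thesis using phi by (simp add: arccos_cos)
    next
      case False then show ?thesis using phi by (simp add: arccos_cos2)
    qed
    have ev: "Psi s p = (eta, s * \<bar>phi\<bar>, psi)" for s
      unfolding Psi_def p_def using cosac Ceq K acp by (simp add: K_def[symmetric])
    show "x \<in> Psi 1 ` W \<union> Psi (-1) ` W"
    proof (cases "0 < phi")
      case True
      then have "x = Psi 1 p" unfolding ev xe by simp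
      then show ?thesis using pW by blast
    next
      case False
      then have "x = Psi (-1) p" unfolding ev xe by simp
      then show ?thesis using pW by blast
    qed
  qed
  show ?thesis
    by (rule negligible_subset[OF _ sub]) (use neg in auto)
qed

end



lemma fst_borel[measurable]: "(fst :: 'a::second_countable_topology \<times> 'b::second_countable_topology \<Rightarrow> 'a) \<in> borel_measurable borel"
  by (subst borel_prod[symmetric]) measurable

lemma snd_borel[measurable]: "(snd :: 'a::second_countable_topology \<times> 'b::second_countable_topology \<Rightarrow> 'b) \<in> borel_measurable borel"
  by (subst borel_prod[symmetric]) measurable

lemma borel_sets_lebesgue: "A \<in> sets borel \<Longrightarrow> A \<in> sets lebesgue"
  by (rule sets_completionI_sets) simp

lemma Dom_sets: "Dom n eps \<in> sets lebesgue"
  unfolding Dom_def by (intro borel_sets_lebesgue borel_closed closed_Times) auto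

lemma Dplus_sets: "Dplus \<in> sets lebesgue"
proof -
  have "Dplus = {p. fst p \<in> {-pi/2..pi/2} \<and> 0 < sin (fst p) \<and> snd p \<in> {-pi..pi}}"
    unfolding Dplus_def by auto
  also have "\<dots> \<in> sets borel" by measurable
  finally show ?thesis by (rule borel_sets_lebesgue)
qed

lemma plane_negl: "negligible {x::real\<times>real\<times>real. fst (snd x) = 0}"
proof -
  have "{x::real\<times>real\<times>real. fst (snd x) = 0} = {x. (0::real, (1::real, 0::real)) \<bullet> x = 0}"
    by (auto simp: inner_prod_def)
  moreover have "(0::real, (1::real, 0::real)) \<noteq> 0" by (simp add: zero_prod_def)
  ultimately show ?thesis using negligible_hyperplane[of "(0::real, (1::real, 0::real))" 0] by simp
qed

lemma meas_null_mod:
  fixes f :: "'a::euclidean_space \<Rightarrow> real"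
  assumes S: "S \<in> sets lebesgue" and Z: "negligible Z"
    and f: "f \<in> borel_measurable (lebesgue_on (S - Z))"
  shows "f \<in> borel_measurable (lebesgue_on S)"
proof -
  have SZ: "S - Z \<in> sets lebesgue" using S negligible_imp_sets[OF Z] by auto
  show ?thesis
  proof (subst borel_measurable_iff_le, intro allI)
    fix a
    have "{w \<in> space (lebesgue_on (S - Z)). f w \<le> a} \<in> sets (lebesgue_on (S - Z))"
      using f by (simp add: borel_measurable_iff_le)
    then have A1: "{w \<in> S - Z. f w \<le> a} \<in> sets lebesgue"
      using SZ by (simp add: sets_restrict_space_iff)
    have A2: "{w \<in> S \<inter> Z. f w \<le> a} \<in> sets lebesgue"
      by (rule negligible_imp_sets, rule negligible_subset[OF Z]) auto
    have "{w \<in> S. f w \<le> a} = {w \<in> S - Z. f w \<le> a} \<union> {w \<in> S \<inter> Z. f w \<le> a}" by auto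
    then have "{w \<in> S. f w \<le> a} \<in> sets lebesgue" using A1 A2 by auto
    then show "{w \<in> space (lebesgue_on S). f w \<le> a} \<in> sets (lebesgue_on S)"
      using S by (simp add: sets_restrict_space_iff)
  qed
qed


context lay begin

abbreviation "D1 \<equiv> Dom n eps - {x. fst (snd x) = 0}"

lemma D1_sets: "D1 \<in> sets lebesgue"
  using Dom_sets negligible_imp_sets[OF plane_negl] by auto

lemma Dom_facts: "x \<in> Dom n eps \<Longrightarrow> 0 \<le> fst x \<and> fst x \<le> L \<and> -pi/2 \<le> fst (snd x) \<and> fst (snd x) \<le> pi/2 \<and> -pi \<le> snd (snd x) \<and> snd (snd x) \<le> pi"
  unfolding Dom_def by auto

lemma Cc_eq: "x \<in> Dom n eps \<Longrightarrow> cchar R1 R2 eps (fst x) (fst (snd x)) (snd (snd x)) =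
    cos (fst (snd x)) * exp (Gc R1 R2 eps (fst x) (snd (snd x)))"
  unfolding cchar_def using Gint_eqL Dom_facts by simp

lemma Cc_range: assumes "x \<in> Dom n eps"
  shows "0 \<le> cos (fst (snd x)) * exp (Gc R1 R2 eps (fst x) (snd (snd x)))"
    "cos (fst (snd x)) * exp (Gc R1 R2 eps (fst x) (snd (snd x))) \<le> 1"
proof -
  have a: "0 \<le> cos (fst (snd x))" using cos_dom Dom_facts[OF assms] by auto
  have b: "exp (Gc R1 R2 eps (fst x) (snd (snd x))) \<le> 1" using Gc_le0 Dom_facts[OF assms] by auto
  show "0 \<le> cos (fst (snd x)) * exp (Gc R1 R2 eps (fst x) (snd (snd x)))" using a by simp
  show "cos (fst (snd x)) * exp (Gc R1 R2 eps (fst x) (snd (snd x))) \<le> 1"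
    using a b by (intro mult_le_one) auto
qed

lemma C_meas: "(\<lambda>x. cchar R1 R2 eps (fst x) (fst (snd x)) (snd (snd x))) \<in> borel_measurable (lebesgue_on D1)"
proof -
  have "(\<lambda>x::real\<times>real\<times>real. cos (fst (snd x)) * exp (Gc R1 R2 eps (fst x) (snd (snd x)))) \<in> borel_measurable (lebesgue_on D1)"
    by (rule borel_lebesgue_on) measurable
  then show ?thesis by (rule measurable_cong[THEN iffD1, rotated]) (use Cc_eq in auto)
qed

lemma Tm_Dplus:
  assumes x: "x \<in> D1"
  shows "(arccos (cchar R1 R2 eps (fst x) (fst (snd x)) (snd (snd x))), snd (snd x)) \<in> Dplus"
proof -
  have xD: "x \<in> Dom n eps" and phi0: "fst (snd x) \<noteq> 0" using x by auto
  note f = Dom_facts[OF xD]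
  define C where "C = cchar R1 R2 eps (fst x) (fst (snd x)) (snd (snd x))"
  have C01: "0 \<le> C" "C \<le> 1" unfolding C_def using Cc_eq[OF xD] Cc_range[OF xD] by auto
  have "cos \<bar>fst (snd x)\<bar> < cos 0"
    by (rule cos_monotone_0_pi) (use f phi0 in auto)
  then have cp1: "cos (fst (snd x)) < 1" by simp
  have K: "exp (Gc R1 R2 eps (fst x) (snd (snd x))) \<le> 1" using Gc_le0 f by auto
  have "C < 1"
  proof -
    have "C = cos (fst (snd x)) * exp (Gc R1 R2 eps (fst x) (snd (snd x)))" unfolding C_def using Cc_eq[OF xD] .
    also have "\<dots> \<le> cos (fst (snd x))" using K cos_dom f by (intro mult_left_le) auto
    finally show ?thesis using cp1 by simp
  qed
  have a1: "0 \<le> arccos C" using C01 by (intro arccos_lbound) auto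
  have a2: "arccos C \<le> pi/2" using C01 by (intro arccos_le_pi2) auto
  have "sin (arccos C) = sqrt (1 - C^2)" using C01 by (intro sin_arccos) auto
  moreover have "C^2 < 1" using C01 \<open>C < 1\<close> by (simp add: power2_less_1_iff) 
  ultimately have "0 < sin (arccos C)" by simp
  then show ?thesis unfolding Dplus_def C_def[symmetric] using a1 a2 f by auto
qed

lemma Tm_cont: "continuous_on D1 (\<lambda>x. (arccos (cchar R1 R2 eps (fst x) (fst (snd x)) (snd (snd x))), snd (snd x)))"
proof -
  have "continuous_on D1 (\<lambda>x::real\<times>real\<times>real. (arccos (cos (fst (snd x)) * exp (Gc R1 R2 eps (fst x) (snd (snd x)))), snd (snd x)))"
  proof -
    have ln: "\<And>x. x \<in> D1 \<Longrightarrow> 1 - eps * fst x / R1 \<noteq> 0 \<and> 1 - eps * fst x / R2 \<noteq> 0"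
      using lnarg_pos Dom_facts by force
    have rg: "\<forall>x\<in>D1. -1 \<le> cos (fst (snd x)) * exp (Gc R1 R2 eps (fst x) (snd (snd x))) \<and>
        cos (fst (snd x)) * exp (Gc R1 R2 eps (fst x) (snd (snd x))) \<le> 1"
      using Cc_range by (smt (verit) DiffD1)
    show ?thesis unfolding Gc_def
      by (intro continuous_intros continuous_on_arccos) (use ln rg R1 R2 in \<open>auto simp: Gc_def\<close>)
  qed
  then show ?thesis by (rule continuous_on_cong[THEN iffD1, rotated 2]) (use Cc_eq in auto)
qed

lemma Tm_meas:
  "(\<lambda>x. (arccos (cchar R1 R2 eps (fst x) (fst (snd x)) (snd (snd x))), snd (snd x))) \<in> lebesgue_on D1 \<rightarrow>\<^sub>M lebesgue_on Dplus"
  (is "?T \<in> _")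
proof (rule measurableI)
  fix x assume "x \<in> space (lebesgue_on D1)"
  then show "?T x \<in> space (lebesgue_on Dplus)" using Tm_Dplus by simp
next
  fix A assume A: "A \<in> sets (lebesgue_on Dplus)"
  then have A1: "A \<in> sets lebesgue" "A \<subseteq> Dplus" using Dplus_sets by (auto simp: sets_restrict_space_iff)
  obtain S N N' where SN: "A = S \<union> N" "N \<subseteq> N'" "N' \<in> null_sets lborel" "S \<in> sets lborel"
    using A1(1) by (rule sets_completionE)
  have Tb: "?T \<in> borel_measurable (lebesgue_on D1)"
    by (rule continuous_imp_measurable_on_sets_lebesgue[OF Tm_cont D1_sets])
  have P1: "?T -` S \<inter> space (lebesgue_on D1) \<in> sets (lebesgue_on D1)"
    using measurable_sets[OF Tb, of S] SN(4) by simp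
  have N'neg: "negligible N'" using SN(3) by (simp add: negligible_iff_null_sets null_sets_completionI)
  have "?T -` N \<inter> D1 \<subseteq> {x \<in> Dom n eps. fst (snd x) \<noteq> 0 \<and>
     (arccos (cchar R1 R2 eps (fst x) (fst (snd x)) (snd (snd x))), snd (snd x)) \<in> N'}"
    using SN(2) by auto
  then have "negligible (?T -` N \<inter> D1)" by (rule negligible_subset[OF Tm_negl[OF N'neg]])
  then have P2: "?T -` N \<inter> space (lebesgue_on D1) \<in> sets (lebesgue_on D1)"
    using D1_sets by (simp add: sets_restrict_space_iff negligible_imp_sets)
  have "?T -` A \<inter> space (lebesgue_on D1) = (?T -` S \<inter> space (lebesgue_on D1)) \<union> (?T -` N \<inter> space (lebesgue_on D1))"
    using SN(1) by auto
  then show "?T -` A \<inter> space (lebesgue_on D1) \<in> sets (lebesgue_on D1)" using P1 P2 by auto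
qed

lemma hT_meas:
  assumes "h \<in> borel_measurable (lebesgue_on Dplus)"
  shows "(\<lambda>x. h (arccos (cchar R1 R2 eps (fst x) (fst (snd x)) (snd (snd x))), snd (snd x))) \<in> borel_measurable (lebesgue_on D1)"
  using measurable_comp[OF Tm_meas assms] by (simp add: comp_def)

end



definition fcf :: "real \<Rightarrow> real \<Rightarrow> real \<Rightarrow> real \<Rightarrow> real \<Rightarrow> real \<Rightarrow> real" where
  "fcf R1 R2 eps C psi y = 1 / sqrt (1 - (C * exp (- Gc R1 R2 eps y psi))^2)"

lemma fcf_meas[measurable]:
  assumes [measurable]: "f \<in> borel_measurable M" "g \<in> borel_measurable M" "k \<in> borel_measurable M"
  shows "(\<lambda>x. fcf R1 R2 eps (f x) (g x) (k x)) \<in> borel_measurable M"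
  unfolding fcf_def by measurable

lemma NN_meas:
  assumes [measurable]: "a \<in> borel_measurable M" "b \<in> borel_measurable M"
     "C \<in> borel_measurable M" "p \<in> borel_measurable M"
  shows "(\<lambda>x. \<integral>\<^sup>+ y. ennreal (if a x \<le> y \<and> y \<le> b x then fcf R1 R2 eps (C x) (p x) y else 0) \<partial>lborel)
     \<in> borel_measurable M"
  by measurable

context lay begin

lemma tt_repr:
  assumes ab: "0 \<le> a" "a \<le> b" "b \<le> L"
    and int: "(\<lambda>y. 1 / sqrt (1 - (C * exp (- Gint R1 R2 eps y psi))^2)) integrable_on {a..b}"
    and nn: "\<And>y. y \<in> {a..b} \<Longrightarrow> 0 \<le> 1 / sqrt (1 - (C * exp (- Gint R1 R2 eps y psi))^2)"
  shows "ttime R1 R2 eps psi C a b =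
     enn2real (\<integral>\<^sup>+ y. ennreal (if a \<le> y \<and> y \<le> b then fcf R1 R2 eps C psi y else 0) \<partial>lborel)"
proof -
  have eq: "\<And>y. y \<in> {a..b} \<Longrightarrow> 1 / sqrt (1 - (C * exp (- Gint R1 R2 eps y psi))^2) = fcf R1 R2 eps C psi y"
    unfolding fcf_def using Gint_eqL ab by auto
  have int2: "fcf R1 R2 eps C psi integrable_on {a..b}"
    using int by (subst integrable_cong[where g="\<lambda>y. 1 / sqrt (1 - (C * exp (- Gint R1 R2 eps y psi))^2)"]) (auto simp: eq)
  have tt: "ttime R1 R2 eps psi C a b = integral {a..b} (fcf R1 R2 eps C psi)"
    unfolding ttime_def using eq by (intro integral_cong) auto
  have hi: "(fcf R1 R2 eps C psi has_integral ttime R1 R2 eps psi C a b) {a..b}"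
    unfolding tt using int2 by (simp add: integrable_integral)
  have nn2: "\<And>y. y \<in> {a..b} \<Longrightarrow> 0 \<le> fcf R1 R2 eps C psi y" using nn eq by metis
  have t0: "0 \<le> ttime R1 R2 eps psi C a b" unfolding tt using int2 nn2 by (rule integral_nonneg)
  have "(\<integral>\<^sup>+ y. ennreal (fcf R1 R2 eps C psi y) * indicator {a..b} y \<partial>lborel) = ennreal (ttime R1 R2 eps psi C a b)"
    by (rule nn_integral_has_integral_lebesgue'[OF nn2 hi])
  moreover have "(\<lambda>y. ennreal (fcf R1 R2 eps C psi y) * indicator {a..b} y) =
      (\<lambda>y. ennreal (if a \<le> y \<and> y \<le> b then fcf R1 R2 eps C psi y else 0))"
    by (auto simp: indicator_def)
  ultimately show ?thesis using t0 by simp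
qed


lemma seg_reprs:
  assumes xD: "(eta, phi, psi) \<in> Dom n eps"
  defines "C \<equiv> cchar R1 R2 eps eta phi psi"
  defines "m \<equiv> turnpt n R1 R2 eps psi C eta"
  shows "ttime R1 R2 eps psi C 0 eta = enn2real (\<integral>\<^sup>+ y. ennreal (if 0 \<le> y \<and> y \<le> eta then fcf R1 R2 eps C psi y else 0) \<partial>lborel)"
    and "ttime R1 R2 eps psi C 0 m = enn2real (\<integral>\<^sup>+ y. ennreal (if 0 \<le> y \<and> y \<le> m then fcf R1 R2 eps C psi y else 0) \<partial>lborel)"
    and "ttime R1 R2 eps psi C eta m = enn2real (\<integral>\<^sup>+ y. ennreal (if eta \<le> y \<and> y \<le> m then fcf R1 R2 eps C psi y else 0) \<partial>lborel)"
proof -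
  have eta: "0 \<le> eta" "eta \<le> L" and phi: "-pi/2 \<le> phi" "phi \<le> pi/2"
    using xD unfolding Dom_def by auto
  define cp where "cp = cos phi"
  have cp: "0 \<le> cp" "cp \<le> 1" unfolding cp_def using cos_dom phi by auto
  have Ceq: "C = cp * exp (Gc R1 R2 eps eta psi)"
    unfolding C_def cchar_def cp_def using Gint_eqL eta by simp
  have C0: "0 \<le> C" using Ceq cp by simp
  have qeta: "C * exp (- Gc R1 R2 eps eta psi) = cp" unfolding Ceq by (simp add: exp_minus field_simps)
  have lt1: "\<And>y. 0 \<le> y \<Longrightarrow> y < eta \<Longrightarrow> C * exp (- Gc R1 R2 eps y psi) < 1"
    using q_below_eta cp eta by (auto simp: Ceq mult.assoc)
  have le1: "C * exp (- Gc R1 R2 eps eta psi) \<le> 1" using qeta cp by simp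
  show "ttime R1 R2 eps psi C 0 eta = enn2real (\<integral>\<^sup>+ y. ennreal (if 0 \<le> y \<and> y \<le> eta then fcf R1 R2 eps C psi y else 0) \<partial>lborel)"
  proof (rule tt_repr[OF order_refl eta(1) eta(2)])
    show "(\<lambda>y. 1 / sqrt (1 - (C * exp (- Gint R1 R2 eps y psi))^2)) integrable_on {0..eta}"
      using tt_int(1)[OF C0 eta, of psi] lt1 le1 by blast
    show "\<And>y. y \<in> {0..eta} \<Longrightarrow> 0 \<le> 1 / sqrt (1 - (C * exp (- Gint R1 R2 eps y psi))^2)"
      using tt_nonneg[OF C0 eta, of psi] lt1 le1 by blast
  qed
  note tf = turn_facts[OF eta cp Ceq meta_eq_to_obj_eq[OF m_def]]
  have m0: "0 \<le> m" using tf(1) eta by simp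
  have I: "(\<lambda>y. 1 / sqrt (1 - (C * exp (- Gint R1 R2 eps y psi))^2)) integrable_on {0..m}"
    using tt_int(1)[OF C0 m0 tf(2), of psi] tf(3,4) by blast
  have N: "\<And>y. y \<in> {0..m} \<Longrightarrow> 0 \<le> 1 / sqrt (1 - (C * exp (- Gint R1 R2 eps y psi))^2)"
    using tt_nonneg[OF C0 m0 tf(2), of psi] tf(3,4) by blast
  show "ttime R1 R2 eps psi C 0 m = enn2real (\<integral>\<^sup>+ y. ennreal (if 0 \<le> y \<and> y \<le> m then fcf R1 R2 eps C psi y else 0) \<partial>lborel)"
    by (rule tt_repr[OF order_refl m0 tf(2) I]) (rule N, simp)
  show "ttime R1 R2 eps psi C eta m = enn2real (\<integral>\<^sup>+ y. ennreal (if eta \<le> y \<and> y \<le> m then fcf R1 R2 eps C psi y else 0) \<partial>lborel)"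
    by (rule tt_repr[OF eta(1) tf(1) tf(2) integrable_subinterval_real[OF I]]) (use eta N in auto)
qed

lemma m_meas: "(\<lambda>x. turnpt n R1 R2 eps (snd (snd x)) (cchar R1 R2 eps (fst x) (fst (snd x)) (snd (snd x))) (fst x))
   \<in> borel_measurable (lebesgue_on D1)"
proof (subst borel_measurable_iff_le, intro allI)
  fix t
  define Q where "Q = {x::real\<times>real\<times>real. L \<le> t \<or> (fst x \<le> t \<and> t \<le> L \<and>
      1 \<le> cos (fst (snd x)) * exp (Gc R1 R2 eps (fst x) (snd (snd x))) * exp (- Gc R1 R2 eps t (snd (snd x))))}"
  have Qb: "Q \<in> sets borel" unfolding Q_def by measurable
  have "{w \<in> space (lebesgue_on D1). turnpt n R1 R2 eps (snd (snd w)) (cchar R1 R2 eps (fst w) (fst (snd w)) (snd (snd w))) (fst w) \<le> t}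
     = D1 \<inter> Q"
  proof (intro set_eqI iffI)
    fix x assume x: "x \<in> {w \<in> space (lebesgue_on D1). turnpt n R1 R2 eps (snd (snd w)) (cchar R1 R2 eps (fst w) (fst (snd w)) (snd (snd w))) (fst w) \<le> t}"
    then have xD: "x \<in> Dom n eps" "x \<in> D1" by auto
    note f = Dom_facts[OF xD(1)]
    have e1: "0 \<le> fst x" "fst x \<le> L" and p1: "0 \<le> cos (fst (snd x))" using f cos_dom by auto
    note tf = turn_facts[OF e1 p1 cos_le_one Cc_eq[OF xD(1)] refl]
    show "x \<in> D1 \<inter> Q" using x xD tf(5)[of t] f Cc_eq[OF xD(1)] unfolding Q_def by auto
  next
    fix x assume x: "x \<in> D1 \<inter> Q"
    then have xD: "x \<in> Dom n eps" "x \<in> D1" by auto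
    note f = Dom_facts[OF xD(1)]
    have e1: "0 \<le> fst x" "fst x \<le> L" and p1: "0 \<le> cos (fst (snd x))" using f cos_dom by auto
    note tf = turn_facts[OF e1 p1 cos_le_one Cc_eq[OF xD(1)] refl]
    show "x \<in> {w \<in> space (lebesgue_on D1). turnpt n R1 R2 eps (snd (snd w)) (cchar R1 R2 eps (fst w) (fst (snd w)) (snd (snd w))) (fst w) \<le> t}"
      using x xD tf(5)[of t] f Cc_eq[OF xD(1)] unfolding Q_def by auto
  qed
  moreover have "D1 \<inter> Q \<in> sets (lebesgue_on D1)"
    using D1_sets borel_sets_lebesgue[OF Qb] by (auto simp: sets_restrict_space_iff)
  ultimately show "{w \<in> space (lebesgue_on D1). turnpt n R1 R2 eps (snd (snd w)) (cchar R1 R2 eps (fst w) (fst (snd w)) (snd (snd w))) (fst w) \<le> t}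
     \<in> sets (lebesgue_on D1)" by simp
qed

end



context lay begin

lemma F_meas:
  assumes hm: "h \<in> borel_measurable (lebesgue_on Dplus)"
  shows "(\<lambda>x. exp (beta * fst x) * Ksol n R1 R2 eps h x) \<in> borel_measurable (lebesgue_on (Dom n eps))"
proof -
  define C where "C = (\<lambda>x::real\<times>real\<times>real. cchar R1 R2 eps (fst x) (fst (snd x)) (snd (snd x)))"
  define m where "m = (\<lambda>x. turnpt n R1 R2 eps (snd (snd x)) (C x) (fst x))"
  define hT where "hT = (\<lambda>x. h (arccos (C x), snd (snd x)))"
  define N1 where "N1 = (\<lambda>x. \<integral>\<^sup>+ y. ennreal (if 0 \<le> y \<and> y \<le> fst x then fcf R1 R2 eps (C x) (snd (snd x)) y else 0) \<partial>lborel)"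
  define N2 where "N2 = (\<lambda>x. \<integral>\<^sup>+ y. ennreal (if 0 \<le> y \<and> y \<le> m x then fcf R1 R2 eps (C x) (snd (snd x)) y else 0) \<partial>lborel)"
  define N3 where "N3 = (\<lambda>x. \<integral>\<^sup>+ y. ennreal (if fst x \<le> y \<and> y \<le> m x then fcf R1 R2 eps (C x) (snd (snd x)) y else 0) \<partial>lborel)"
  have [measurable]: "C \<in> borel_measurable (lebesgue_on D1)" unfolding C_def by (rule C_meas)
  have [measurable]: "m \<in> borel_measurable (lebesgue_on D1)" unfolding m_def C_def by (rule m_meas)
  have [measurable]: "hT \<in> borel_measurable (lebesgue_on D1)" unfolding hT_def C_def by (rule hT_meas[OF hm])
  have [measurable]: "(\<lambda>x::real\<times>real\<times>real. fst x) \<in> borel_measurable (lebesgue_on D1)"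
    by (rule borel_lebesgue_on) measurable
  have [measurable]: "(\<lambda>x::real\<times>real\<times>real. fst (snd x)) \<in> borel_measurable (lebesgue_on D1)"
    by (rule borel_lebesgue_on) measurable
  have [measurable]: "(\<lambda>x::real\<times>real\<times>real. snd (snd x)) \<in> borel_measurable (lebesgue_on D1)"
    by (rule borel_lebesgue_on) measurable
  have [measurable]: "N1 \<in> borel_measurable (lebesgue_on D1)" unfolding N1_def by (rule NN_meas) measurable
  have [measurable]: "N2 \<in> borel_measurable (lebesgue_on D1)" unfolding N2_def by (rule NN_meas) measurable
  have [measurable]: "N3 \<in> borel_measurable (lebesgue_on D1)" unfolding N3_def by (rule NN_meas) measurable
  define G where "G = (\<lambda>x::real\<times>real\<times>real. exp (beta * fst x) * (hT x * (if 0 < sin (fst (snd x))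
      then exp (- enn2real (N1 x)) else exp (- (enn2real (N2 x) + enn2real (N3 x))))))"
  have Gm: "G \<in> borel_measurable (lebesgue_on D1)" unfolding G_def by measurable
  have eq: "exp (beta * fst x) * Ksol n R1 R2 eps h x = G x" if x: "x \<in> D1" for x
  proof -
    obtain eta phi psi where xe: "x = (eta, phi, psi)" by (cases x) auto
    have xD: "(eta, phi, psi) \<in> Dom n eps" using x xe by auto
    note sr = seg_reprs[OF xD]
    show ?thesis unfolding G_def xe C_def m_def hT_def N1_def N2_def N3_def fst_conv snd_conv
      using sr by (simp add: Ksol_def Let_def)
  qed
  have "(\<lambda>x. exp (beta * fst x) * Ksol n R1 R2 eps h x) \<in> borel_measurable (lebesgue_on D1)"
    using Gm by (rule measurable_cong[THEN iffD2, rotated]) (use eq in auto)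
  then show ?thesis by (rule meas_null_mod[OF Dom_sets plane_negl])
qed


lemma main_lay:
  assumes hm: "h \<in> borel_measurable (lebesgue_on Dplus)" and beta: "0 \<le> beta" "beta \<le> 1"
  shows "esssup (lebesgue_on (Dom n eps))
              (\<lambda>(eta, phi, psi). ereal (\<bar>exp (beta * eta) * Ksol n R1 R2 eps h (eta, phi, psi)\<bar>))
           \<le> esssup (lebesgue_on Dplus) (\<lambda>x. ereal \<bar>h x\<bar>)"
proof -
  define M where "M = esssup (lebesgue_on Dplus) (\<lambda>x. ereal \<bar>h x\<bar>)"
  define F where "F = (\<lambda>x. exp (beta * fst x) * Ksol n R1 R2 eps h x)"
  have feq: "(\<lambda>(eta, phi, psi). ereal (\<bar>exp (beta * eta) * Ksol n R1 R2 eps h (eta, phi, psi)\<bar>))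
      = (\<lambda>x. ereal \<bar>F x\<bar>)" unfolding F_def by (auto simp: fun_eq_iff)
  have Fm: "F \<in> borel_measurable (lebesgue_on (Dom n eps))" unfolding F_def by (rule F_meas[OF hm])
  have AEh: "AE y in lebesgue_on Dplus. ereal \<bar>h y\<bar> \<le> M" unfolding M_def by (rule esssup_AE)
  then obtain N where N: "{y \<in> space (lebesgue_on Dplus). \<not> ereal \<bar>h y\<bar> \<le> M} \<subseteq> N"
      "emeasure (lebesgue_on Dplus) N = 0" "N \<in> sets (lebesgue_on Dplus)"
    by (rule AE_E)
  have "N \<in> null_sets (lebesgue_on Dplus)" using N by auto
  then have Nn: "negligible N" using Dplus_sets
    by (simp add: null_sets_restrict_space negligible_iff_null_sets)
  define Z where "Z = Dom n eps \<inter> ({x. fst (snd x) = 0} \<union> {x \<in> Dom n eps. fst (snd x) \<noteq> 0 \<and>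
     (arccos (cchar R1 R2 eps (fst x) (fst (snd x)) (snd (snd x))), snd (snd x)) \<in> N})"
  have "negligible Z" unfolding Z_def
    by (rule negligible_subset[OF negligible_Un[OF plane_negl Tm_negl[OF Nn]]]) auto
  then have Zn: "Z \<in> null_sets (lebesgue_on (Dom n eps))"
    using Dom_sets by (simp add: null_sets_restrict_space negligible_iff_null_sets Z_def)
  have AE: "AE x in lebesgue_on (Dom n eps). ereal \<bar>F x\<bar> \<le> M"
  proof (rule AE_I'[OF Zn], safe)
    fix x assume x: "x \<in> space (lebesgue_on (Dom n eps))" and nle: "\<not> ereal \<bar>F x\<bar> \<le> M"
    show "x \<in> Z"
    proof (rule ccontr)
      assume "x \<notin> Z"
      then have xD1: "x \<in> D1" and xN: "(arccos (cchar R1 R2 eps (fst x) (fst (snd x)) (snd (snd x))), snd (snd x)) \<notin> N"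
        using x unfolding Z_def by auto
      have TD: "(arccos (cchar R1 R2 eps (fst x) (fst (snd x)) (snd (snd x))), snd (snd x)) \<in> Dplus"
        by (rule Tm_Dplus[OF xD1])
      then have hb: "ereal \<bar>h (arccos (cchar R1 R2 eps (fst x) (fst (snd x)) (snd (snd x))), snd (snd x))\<bar> \<le> M"
        using N(1) xN by auto
      obtain eta phi psi where xe: "x = (eta, phi, psi)" by (cases x) auto
      have "\<bar>F x\<bar> \<le> \<bar>h (arccos (cchar R1 R2 eps (fst x) (fst (snd x)) (snd (snd x))), snd (snd x))\<bar>"
        unfolding F_def xe using Ksol_bound[of eta phi psi beta h] xD1 beta xe by auto
      then have "ereal \<bar>F x\<bar> \<le> M" using hb by (meson ereal_less_eq(3) order_trans)
      then show False using nle by simp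
    qed
  qed
  have "esssup (lebesgue_on (Dom n eps)) (\<lambda>x. ereal \<bar>F x\<bar>) \<le> M"
    by (rule esssup_I) (use Fm AE in auto)
  then show ?thesis unfolding feq M_def .
qed

end

lemma eps0_exists:
  fixes n R1 R2 :: real
  assumes "0 < n" "n < 1/2" "0 < R1" "0 < R2"
  shows "\<exists>eps0>0. \<forall>eps. 0 < eps \<and> eps < 1 \<and> eps < eps0 \<longrightarrow> lay n R1 R2 eps"
proof -
  define r where "r = min R1 R2"
  have r: "0 < r" "r \<le> R1" "r \<le> R2" using assms unfolding r_def by auto
  show ?thesis
  proof (intro exI[of _ "r^2"] conjI allI impI)
    show "0 < r^2" using r by simp
    fix eps assume e: "0 < eps \<and> eps < 1 \<and> eps < r^2"
    have "eps * Lcut n eps = eps powr (1 - n)"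
      unfolding Lcut_def using e by (simp add: powr_diff powr_minus divide_inverse)
    also have "\<dots> \<le> eps powr (1/2)"
      using e assms by (intro powr_mono') auto
    also have "\<dots> = sqrt eps" using e by (simp add: powr_half_sqrt)
    also have "\<dots> < sqrt (r^2)" using e by (intro real_sqrt_less_mono) auto
    also have "\<dots> = r" using r by simp
    finally have "eps * Lcut n eps < r" .
    then show "lay n R1 R2 eps" using e r assms by unfold_locales auto
  qed
qed


theorem lemma4p4:
  fixes n R1 R2 :: real
  assumes "0 < n" "n < 1/2" "0 < R1" "0 < R2"
  shows "\<exists>eps0>0. \<forall>eps. 0 < eps \<and> eps < 1 \<and> eps < eps0 \<longrightarrow>
     (\<forall>(h :: real \<times> real \<Rightarrow> real). h \<in> borel_measurable (lebesgue_on Dplus) \<longrightarrow>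
        (\<forall>beta::real. 0 \<le> beta \<and> beta \<le> 1 \<longrightarrow>
           esssup (lebesgue_on (Dom n eps))
              (\<lambda>(eta, phi, psi). ereal (\<bar>exp (beta * eta) * Ksol n R1 R2 eps h (eta, phi, psi)\<bar>))
           \<le> esssup (lebesgue_on Dplus) (\<lambda>x. ereal \<bar>h x\<bar>))
      \<and> esssup (lebesgue_on (Dom n eps)) (\<lambda>x. ereal \<bar>Ksol n R1 R2 eps h x\<bar>)
           \<le> esssup (lebesgue_on Dplus) (\<lambda>x. ereal \<bar>h x\<bar>))"
proof -
  obtain eps0 where e0: "0 < eps0" "\<And>eps. 0 < eps \<and> eps < 1 \<and> eps < eps0 \<Longrightarrow> lay n R1 R2 eps"
    using eps0_exists[OF assms] by blast
  show ?thesis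
  proof (intro exI[of _ eps0] conjI allI impI)
    show "0 < eps0" by fact
  next
    fix eps :: real and h :: "real \<times> real \<Rightarrow> real" and beta :: real
    assume e: "0 < eps \<and> eps < 1 \<and> eps < eps0" and hm: "h \<in> borel_measurable (lebesgue_on Dplus)"
      and b: "0 \<le> beta \<and> beta \<le> 1"
    interpret lay n R1 R2 eps using e0(2)[OF e] .
    show "esssup (lebesgue_on (Dom n eps))
            (\<lambda>(eta, phi, psi). ereal (\<bar>exp (beta * eta) * Ksol n R1 R2 eps h (eta, phi, psi)\<bar>))
         \<le> esssup (lebesgue_on Dplus) (\<lambda>x. ereal \<bar>h x\<bar>)"
      using main_lay[OF hm] b by auto
  next
    fix eps :: real and h :: "real \<times> real \<Rightarrow> real"
    assume e: "0 < eps \<and> eps < 1 \<and> eps < eps0" and hm: "h \<in> borel_measurable (lebesgue_on Dplus)"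
    interpret lay n R1 R2 eps using e0(2)[OF e] .
    have "(\<lambda>x. ereal \<bar>Ksol n R1 R2 eps h x\<bar>) =
        (\<lambda>(eta, phi, psi). ereal (\<bar>exp (0 * eta) * Ksol n R1 R2 eps h (eta, phi, psi)\<bar>))"
      by (auto simp: fun_eq_iff)
    then show "esssup (lebesgue_on (Dom n eps)) (\<lambda>x. ereal \<bar>Ksol n R1 R2 eps h x\<bar>)
           \<le> esssup (lebesgue_on Dplus) (\<lambda>x. ereal \<bar>h x\<bar>)"
      using main_lay[OF hm, of 0] by simp
  qed
qed

end
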